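(* Let $(L_1,[\cdot,\cdot]_1,\alpha_1),\dots,(L_n,[\cdot,\cdot]_n,\alpha_n)$ be Hom-Lie algebras over a field $F$ and let $\mu_i$ be a fuzzy Hom-Lie subalgebra of $L_i$ for $i=1,\dots,n$. Then $\mu_1\oplus\cdots\oplus\mu_n$ is a fuzzy Hom-Lie subalgebra of the Hom-Lie algebra $(L_1\oplus\cdots\oplus L_n,[\cdot,\cdot],\alpha_1+\cdots+\alpha_n)$.
   Context: A Hom-Lie algebra over $F$ is a triple $(L,[\cdot,\cdot],\alpha)$ with $L$ an $F$-vector space, $\alpha:L\to L$ linear and $[\cdot,\cdot]$ bilinear, skew-symmetric, satisfying $[\alpha(x),[y,z]]+[\alpha(y),[z,x]]+[\alpha(z),[x,y]]=0$. The direct sum $L_1\oplus\cdots\oplus L_n$ is a Hom-Lie algebra with componentwise bracket $[(x_1,\dots,x_n),(y_1,\dots,y_n)]=([x_1,y_1]_1,\dots,[x_n,y_n]_n)$ and twisting map $(\alpha_1+\cdots+\alpha_n)(x_1,\dots,x_n)=(\alpha_1(x_1),\dots,\alpha_n(x_n))$. For fuzzy subsets $\mu_i:L_i\to[0,1]$, $(\mu_1\oplus\cdots\oplus\mu_n)(x_1,\dots,x_n)=\mu_1(x_1)\wedge\cdots\wedge\mu_n(x_n)$, where $\wedge$ is minimum. A fuzzy subset $\mu$ of a Hom-Lie algebra $L$ is a fuzzy Hom-Lie subalgebra if for all $x,y\in L$, $c\in F$: $\mu(x+y)\ge\mu(x)\wedge\mu(y)$, $\mu(cx)\ge\mu(x)$,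 $\mu([x,y])\ge\mu(x)\wedge\mu(y)$, $\mu(\alpha(x))\ge\mu(x)$. *)

theory Defs
  imports Complex_Main "HOL-Library.FuncSet"
begin

definition vector_space_on ::
  "'v set \<Rightarrow> ('v \<Rightarrow> 'v \<Rightarrow> 'v) \<Rightarrow> ('f::field \<Rightarrow> 'v \<Rightarrow> 'v) \<Rightarrow> 'v \<Rightarrow> bool" where
  "vector_space_on V add sm zero \<longleftrightarrow>
     zero \<in> V \<and>
     (\<forall>x\<in>V. \<forall>y\<in>V. add x y \<in> V) \<and>
     (\<forall>c. \<forall>x\<in>V. sm c x \<in> V) \<and>
     (\<forall>x\<in>V. \<forall>y\<in>V. \<forall>z\<in>V. add (add x y) z = add x (add y z)) \<and>
     (\<forall>x\<in>V. \<forall>y\<in>V. add x y = add y x) \<and>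
     (\<forall>x\<in>V. add zero x = x) \<and>
     (\<forall>x\<in>V. \<exists>y\<in>V. add x y = zero) \<and>
     (\<forall>a b. \<forall>x\<in>V. sm a (sm b x) = sm (a * b) x) \<and>
     (\<forall>x\<in>V. sm 1 x = x) \<and>
     (\<forall>a. \<forall>x\<in>V. \<forall>y\<in>V. sm a (add x y) = add (sm a x) (sm a y)) \<and>
     (\<forall>a b. \<forall>x\<in>V. sm (a + b) x = add (sm a x) (sm b x))"

definition hom_lie_algebra ::
  "'v set \<Rightarrow> ('v \<Rightarrow> 'v \<Rightarrow> 'v) \<Rightarrow> ('f::field \<Rightarrow> 'v \<Rightarrow> 'v) \<Rightarrow> 'v
     \<Rightarrow> ('v \<Rightarrow> 'v \<Rightarrow> 'v) \<Rightarrow> ('v \<Rightarrow> 'v) \<Rightarrow> bool" where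
  "hom_lie_algebra L add sm zero br \<alpha> \<longleftrightarrow>
     vector_space_on L add sm zero \<and>
     (\<forall>x\<in>L. \<alpha> x \<in> L) \<and>
     (\<forall>x\<in>L. \<forall>y\<in>L. \<alpha> (add x y) = add (\<alpha> x) (\<alpha> y)) \<and>
     (\<forall>c. \<forall>x\<in>L. \<alpha> (sm c x) = sm c (\<alpha> x)) \<and>
     (\<forall>x\<in>L. \<forall>y\<in>L. br x y \<in> L) \<and>
     (\<forall>x\<in>L. \<forall>y\<in>L. \<forall>z\<in>L. br (add x y) z = add (br x z) (br y z)) \<and>
     (\<forall>c. \<forall>x\<in>L. \<forall>y\<in>L. br (sm c x) y = sm c (br x y)) \<and>
     (\<forall>x\<in>L. \<forall>y\<in>L. \<forall>z\<in>L. br x (add y z) = add (br x y) (br x z)) \<and>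
     (\<forall>c. \<forall>x\<in>L. \<forall>y\<in>L. br x (sm c y) = sm c (br x y)) \<and>
     (\<forall>x\<in>L. \<forall>y\<in>L. add (br x y) (br y x) = zero) \<and>
     (\<forall>x\<in>L. \<forall>y\<in>L. \<forall>z\<in>L.
        add (add (br (\<alpha> x) (br y z)) (br (\<alpha> y) (br z x))) (br (\<alpha> z) (br x y)) = zero)"

definition fuzzy_hom_lie_subalgebra ::
  "'v set \<Rightarrow> ('v \<Rightarrow> 'v \<Rightarrow> 'v) \<Rightarrow> ('f::field \<Rightarrow> 'v \<Rightarrow> 'v)
     \<Rightarrow> ('v \<Rightarrow> 'v \<Rightarrow> 'v) \<Rightarrow> ('v \<Rightarrow> 'v) \<Rightarrow> ('v \<Rightarrow> real) \<Rightarrow> bool" where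
  "fuzzy_hom_lie_subalgebra L add sm br \<alpha> \<mu> \<longleftrightarrow>
     (\<forall>x\<in>L. 0 \<le> \<mu> x \<and> \<mu> x \<le> 1) \<and>
     (\<forall>x\<in>L. \<forall>y\<in>L. \<mu> (add x y) \<ge> min (\<mu> x) (\<mu> y)) \<and>
     (\<forall>c. \<forall>x\<in>L. \<mu> (sm c x) \<ge> \<mu> x) \<and>
     (\<forall>x\<in>L. \<forall>y\<in>L. \<mu> (br x y) \<ge> min (\<mu> x) (\<mu> y)) \<and>
     (\<forall>x\<in>L. \<mu> (\<alpha> x) \<ge> \<mu> x)"

text \<open>Direct sum L_0 (+) ... (+) L_{n-1}: tuples as extensional functions on {..<n}.\<close>
definition dsum_carrier :: "nat \<Rightarrow> (nat \<Rightarrow> 'v set) \<Rightarrow> (nat \<Rightarrow> 'v) set" where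
  "dsum_carrier n L = PiE {..<n} L"

definition dsum_op2 :: "nat \<Rightarrow> (nat \<Rightarrow> 'v \<Rightarrow> 'v \<Rightarrow> 'v) \<Rightarrow> (nat \<Rightarrow> 'v) \<Rightarrow> (nat \<Rightarrow> 'v) \<Rightarrow> (nat \<Rightarrow> 'v)" where
  "dsum_op2 n f x y = restrict (\<lambda>i. f i (x i) (y i)) {..<n}"

definition dsum_smult :: "nat \<Rightarrow> (nat \<Rightarrow> 'f \<Rightarrow> 'v \<Rightarrow> 'v) \<Rightarrow> 'f \<Rightarrow> (nat \<Rightarrow> 'v) \<Rightarrow> (nat \<Rightarrow> 'v)" where
  "dsum_smult n s c x = restrict (\<lambda>i. s i c (x i)) {..<n}"

definition dsum_zero :: "nat \<Rightarrow> (nat \<Rightarrow> 'v) \<Rightarrow> (nat \<Rightarrow> 'v)" where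
  "dsum_zero n z = restrict z {..<n}"

definition dsum_map :: "nat \<Rightarrow> (nat \<Rightarrow> 'v \<Rightarrow> 'v) \<Rightarrow> (nat \<Rightarrow> 'v) \<Rightarrow> (nat \<Rightarrow> 'v)" where
  "dsum_map n \<alpha> x = restrict (\<lambda>i. \<alpha> i (x i)) {..<n}"

definition fuzzy_dsum :: "nat \<Rightarrow> (nat \<Rightarrow> 'v \<Rightarrow> real) \<Rightarrow> (nat \<Rightarrow> 'v) \<Rightarrow> real" where
  "fuzzy_dsum n \<mu> x = Min ((\<lambda>i. \<mu> i (x i)) ` {..<n})"

end

theory Submission
  imports Defs
begin

lemma hla0:
  assumes "hom_lie_algebra L add sm zero br \<alpha>"
  shows "zero \<in> L"
    and "\<forall>x\<in>L. \<forall>y\<in>L. add x y \<in> L"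
    and "\<forall>c. \<forall>x\<in>L. sm c x \<in> L"
    and "\<forall>x\<in>L. \<forall>y\<in>L. \<forall>z\<in>L. add (add x y) z = add x (add y z)"
    and "\<forall>x\<in>L. \<forall>y\<in>L. add x y = add y x"
    and "\<forall>x\<in>L. add zero x = x"
    and "\<forall>x\<in>L. \<exists>y\<in>L. add x y = zero"
    and "\<forall>a b. \<forall>x\<in>L. sm a (sm b x) = sm (a * b) x"
    and "\<forall>x\<in>L. sm 1 x = x"
    and "\<forall>a. \<forall>x\<in>L. \<forall>y\<in>L. sm a (add x y) = add (sm a x) (sm a y)"
    and "\<forall>a b. \<forall>x\<in>L. sm (a + b) x = add (sm a x) (sm b x)"
    and "\<forall>x\<in>L. \<alpha> x \<in> L"
    and "\<forall>x\<in>L. \<forall>y\<in>L. \<alpha> (add x y) = add (\<alpha> x) (\<alpha> y)"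
    and "\<forall>c. \<forall>x\<in>L. \<alpha> (sm c x) = sm c (\<alpha> x)"
    and "\<forall>x\<in>L. \<forall>y\<in>L. br x y \<in> L"
    and "\<forall>x\<in>L. \<forall>y\<in>L. \<forall>z\<in>L. br (add x y) z = add (br x z) (br y z)"
    and "\<forall>c. \<forall>x\<in>L. \<forall>y\<in>L. br (sm c x) y = sm c (br x y)"
    and "\<forall>x\<in>L. \<forall>y\<in>L. \<forall>z\<in>L. br x (add y z) = add (br x y) (br x z)"
    and "\<forall>c. \<forall>x\<in>L. \<forall>y\<in>L. br x (sm c y) = sm c (br x y)"
    and "\<forall>x\<in>L. \<forall>y\<in>L. add (br x y) (br y x) = zero"
    and "\<forall>x\<in>L. \<forall>y\<in>L. \<forall>z\<in>L.
        add (add (br (\<alpha> x) (br y z)) (br (\<alpha> y) (br z x))) (br (\<alpha> z) (br x y)) = zero"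
  using assms unfolding hom_lie_algebra_def vector_space_on_def by - (elim conjE; assumption)+

lemmas hla = hla0[rule_format]

lemma fz0:
  assumes "fuzzy_hom_lie_subalgebra L add sm br \<alpha> \<mu>"
  shows "\<forall>x\<in>L. 0 \<le> \<mu> x \<and> \<mu> x \<le> 1"
    and "\<forall>x\<in>L. \<forall>y\<in>L. \<mu> (add x y) \<ge> min (\<mu> x) (\<mu> y)"
    and "\<forall>c. \<forall>x\<in>L. \<mu> (sm c x) \<ge> \<mu> x"
    and "\<forall>x\<in>L. \<forall>y\<in>L. \<mu> (br x y) \<ge> min (\<mu> x) (\<mu> y)"
    and "\<forall>x\<in>L. \<mu> (\<alpha> x) \<ge> \<mu> x"
  using assms unfolding fuzzy_hom_lie_subalgebra_def by - (elim conjE; assumption)+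

lemmas fz = fz0[rule_format]

lemma mem_dsum: "x \<in> dsum_carrier n L \<longleftrightarrow> (\<forall>i<n. x i \<in> L i) \<and> (\<forall>i. \<not> i < n \<longrightarrow> x i = undefined)"
  unfolding dsum_carrier_def PiE_def extensional_def by auto

lemma dsum_eqI: "(\<And>i. i < n \<Longrightarrow> f i = g i) \<Longrightarrow> (\<And>i. \<not> i < n \<Longrightarrow> f i = g i) \<Longrightarrow> f = g"
  by (rule ext) blast

theorem theorem5p1:
  fixes n :: nat
    and L :: "nat \<Rightarrow> 'v set"
    and add :: "nat \<Rightarrow> 'v \<Rightarrow> 'v \<Rightarrow> 'v"
    and sm :: "nat \<Rightarrow> 'f::field \<Rightarrow> 'v \<Rightarrow> 'v"
    and zero :: "nat \<Rightarrow> 'v"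
    and br :: "nat \<Rightarrow> 'v \<Rightarrow> 'v \<Rightarrow> 'v"
    and \<alpha> :: "nat \<Rightarrow> 'v \<Rightarrow> 'v"
    and \<mu> :: "nat \<Rightarrow> 'v \<Rightarrow> real"
  assumes "n \<ge> 1"
    and "\<And>i. i < n \<Longrightarrow> hom_lie_algebra (L i) (add i) (sm i) (zero i) (br i) (\<alpha> i)"
    and "\<And>i. i < n \<Longrightarrow> fuzzy_hom_lie_subalgebra (L i) (add i) (sm i) (br i) (\<alpha> i) (\<mu> i)"
  shows "hom_lie_algebra (dsum_carrier n L) (dsum_op2 n add) (dsum_smult n sm)
           (dsum_zero n zero) (dsum_op2 n br) (dsum_map n \<alpha>)
       \<and> fuzzy_hom_lie_subalgebra (dsum_carrier n L) (dsum_op2 n add) (dsum_smult n sm)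
           (dsum_op2 n br) (dsum_map n \<alpha>) (fuzzy_dsum n \<mu>)"
proof -
  note H = assms(2)[unfolded hom_lie_algebra_def vector_space_on_def]
  note F = assms(3)[unfolded fuzzy_hom_lie_subalgebra_def]
  have z: "\<And>i. i<n \<Longrightarrow> zero i \<in> L i" by (rule hla(1)[OF assms(2)])
  have ac: "\<And>i x y. i<n \<Longrightarrow> x\<in>L i \<Longrightarrow> y\<in>L i \<Longrightarrow> add i x y \<in> L i" by (rule hla(2)[OF assms(2)])
  have sc: "\<And>i c x. i<n \<Longrightarrow> x\<in>L i \<Longrightarrow> sm i c x \<in> L i" by (rule hla(3)[OF assms(2)])
  have aa: "\<And>i x y z. i<n \<Longrightarrow> x\<in>L i \<Longrightarrow> y\<in>L i \<Longrightarrow> z\<in>L i \<Longrightarrow> add i (add i x y) z = add i x (add i y z)" by (rule hla(4)[OF assms(2)])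
  have acm: "\<And>i x y. i<n \<Longrightarrow> x\<in>L i \<Longrightarrow> y\<in>L i \<Longrightarrow> add i x y = add i y x" by (rule hla(5)[OF assms(2)])
  have a0: "\<And>i x. i<n \<Longrightarrow> x\<in>L i \<Longrightarrow> add i (zero i) x = x" by (rule hla(6)[OF assms(2)])
  have ainv: "\<And>i x. i<n \<Longrightarrow> x\<in>L i \<Longrightarrow> \<exists>y\<in>L i. add i x y = zero i" by (rule hla(7)[OF assms(2)])
  have s1: "\<And>i a b x. i<n \<Longrightarrow> x\<in>L i \<Longrightarrow> sm i a (sm i b x) = sm i (a*b) x" by (rule hla(8)[OF assms(2)])
  have s2: "\<And>i x. i<n \<Longrightarrow> x\<in>L i \<Longrightarrow> sm i 1 x = x" by (rule hla(9)[OF assms(2)])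
  have s3: "\<And>i a x y. i<n \<Longrightarrow> x\<in>L i \<Longrightarrow> y\<in>L i \<Longrightarrow> sm i a (add i x y) = add i (sm i a x) (sm i a y)" by (rule hla(10)[OF assms(2)])
  have s4: "\<And>i a b x. i<n \<Longrightarrow> x\<in>L i \<Longrightarrow> sm i (a+b) x = add i (sm i a x) (sm i b x)" by (rule hla(11)[OF assms(2)])
  have h1: "\<And>i x. i<n \<Longrightarrow> x\<in>L i \<Longrightarrow> \<alpha> i x \<in> L i" by (rule hla(12)[OF assms(2)])
  have h2: "\<And>i x y. i<n \<Longrightarrow> x\<in>L i \<Longrightarrow> y\<in>L i \<Longrightarrow> \<alpha> i (add i x y) = add i (\<alpha> i x) (\<alpha> i y)" by (rule hla(13)[OF assms(2)])
  have h3: "\<And>i c x. i<n \<Longrightarrow> x\<in>L i \<Longrightarrow> \<alpha> i (sm i c x) = sm i c (\<alpha> i x)" by (rule hla(14)[OF assms(2)])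
  have b1: "\<And>i x y. i<n \<Longrightarrow> x\<in>L i \<Longrightarrow> y\<in>L i \<Longrightarrow> br i x y \<in> L i" by (rule hla(15)[OF assms(2)])
  have b2: "\<And>i x y z. i<n \<Longrightarrow> x\<in>L i \<Longrightarrow> y\<in>L i \<Longrightarrow> z\<in>L i \<Longrightarrow> br i (add i x y) z = add i (br i x z) (br i y z)" by (rule hla(16)[OF assms(2)])
  have b3: "\<And>i c x y. i<n \<Longrightarrow> x\<in>L i \<Longrightarrow> y\<in>L i \<Longrightarrow> br i (sm i c x) y = sm i c (br i x y)" by (rule hla(17)[OF assms(2)])
  have b4: "\<And>i x y z. i<n \<Longrightarrow> x\<in>L i \<Longrightarrow> y\<in>L i \<Longrightarrow> z\<in>L i \<Longrightarrow> br i x (add i y z) = add i (br i x y) (br i x z)" by (rule hla(18)[OF assms(2)])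
  have b5: "\<And>i c x y. i<n \<Longrightarrow> x\<in>L i \<Longrightarrow> y\<in>L i \<Longrightarrow> br i x (sm i c y) = sm i c (br i x y)" by (rule hla(19)[OF assms(2)])
  have b6: "\<And>i x y. i<n \<Longrightarrow> x\<in>L i \<Longrightarrow> y\<in>L i \<Longrightarrow> add i (br i x y) (br i y x) = zero i" by (rule hla(20)[OF assms(2)])
  have b7: "\<And>i x y z. i<n \<Longrightarrow> x\<in>L i \<Longrightarrow> y\<in>L i \<Longrightarrow> z\<in>L i \<Longrightarrow>
        add i (add i (br i (\<alpha> i x) (br i y z)) (br i (\<alpha> i y) (br i z x))) (br i (\<alpha> i z) (br i x y)) = zero i" by (rule hla(21)[OF assms(2)])
  have f0: "\<And>i x. i<n \<Longrightarrow> x\<in>L i \<Longrightarrow> 0 \<le> \<mu> i x \<and> \<mu> i x \<le> 1" by (rule fz(1)[OF assms(3)])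
  have f1: "\<And>i x y. i<n \<Longrightarrow> x\<in>L i \<Longrightarrow> y\<in>L i \<Longrightarrow> \<mu> i (add i x y) \<ge> min (\<mu> i x) (\<mu> i y)" by (rule fz(2)[OF assms(3)])
  have f2: "\<And>i c x. i<n \<Longrightarrow> x\<in>L i \<Longrightarrow> \<mu> i (sm i c x) \<ge> \<mu> i x" by (rule fz(3)[OF assms(3)])
  have f3: "\<And>i x y. i<n \<Longrightarrow> x\<in>L i \<Longrightarrow> y\<in>L i \<Longrightarrow> \<mu> i (br i x y) \<ge> min (\<mu> i x) (\<mu> i y)" by (rule fz(4)[OF assms(3)])
  have f4: "\<And>i x. i<n \<Longrightarrow> x\<in>L i \<Longrightarrow> \<mu> i (\<alpha> i x) \<ge> \<mu> i x" by (rule fz(5)[OF assms(3)])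
  note defs = mem_dsum dsum_op2_def dsum_smult_def dsum_zero_def dsum_map_def
  have inv: "\<exists>y\<in>dsum_carrier n L. dsum_op2 n add x y = dsum_zero n zero" if x: "x \<in> dsum_carrier n L" for x
  proof -
    define y where "y = restrict (\<lambda>i. SOME y. y \<in> L i \<and> add i (x i) y = zero i) {..<n}"
    have yi: "y i \<in> L i \<and> add i (x i) (y i) = zero i" if i: "i<n" for i
    proof -
      have xi: "x i \<in> L i" using x i by (simp add: mem_dsum)
      have "\<exists>y. y \<in> L i \<and> add i (x i) y = zero i" using ainv[OF i xi] by blast
      from someI_ex[OF this] show ?thesis using i by (simp add: y_def)
    qed
    have ym: "y \<in> dsum_carrier n L" unfolding mem_dsum using yi by (simp add: y_def)
    have "dsum_op2 n add x y = dsum_zero n zero"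
      by (rule dsum_eqI) (simp_all add: dsum_op2_def dsum_zero_def yi)
    with ym show ?thesis by blast
  qed
  have ne: "{..<n} \<noteq> {}" using assms(1) by (simp add: lessThan_empty_iff)
  have Mle: "fuzzy_dsum n \<mu> x \<le> \<mu> i (x i)" if "i<n" for x i
    unfolding fuzzy_dsum_def using that by (intro Min_le) auto
  have Mge: "c \<le> fuzzy_dsum n \<mu> x" if "\<And>i. i<n \<Longrightarrow> c \<le> \<mu> i (x i)" for x c
    unfolding fuzzy_dsum_def using that ne by (subst Min_ge_iff) auto
  have P1: "hom_lie_algebra (dsum_carrier n L) (dsum_op2 n add) (dsum_smult n sm)
           (dsum_zero n zero) (dsum_op2 n br) (dsum_map n \<alpha>)"
    unfolding hom_lie_algebra_def vector_space_on_def
    apply (intro conjI ballI allI)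
    subgoal by (auto simp: defs z)
    subgoal by (auto simp: defs ac)
    subgoal by (auto simp: defs sc)
    subgoal by (rule dsum_eqI) (auto simp: defs aa)
    subgoal by (rule dsum_eqI) (auto simp: defs intro: acm)
    subgoal by (rule dsum_eqI) (auto simp: defs a0)
    subgoal by (rule inv)
    subgoal by (rule dsum_eqI) (auto simp: defs s1)
    subgoal by (rule dsum_eqI) (auto simp: defs s2)
    subgoal by (rule dsum_eqI) (auto simp: defs s3)
    subgoal by (rule dsum_eqI) (auto simp: defs s4)
    subgoal by (auto simp: defs h1)
    subgoal by (rule dsum_eqI) (auto simp: defs h2)
    subgoal by (rule dsum_eqI) (auto simp: defs h3)
    subgoal by (auto simp: defs b1)
    subgoal by (rule dsum_eqI) (auto simp: defs b2)
    subgoal by (rule dsum_eqI) (auto simp: defs b3)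
    subgoal by (rule dsum_eqI) (auto simp: defs b4)
    subgoal by (rule dsum_eqI) (auto simp: defs b5)
    subgoal by (rule dsum_eqI) (auto simp: defs b6)
    subgoal by (rule dsum_eqI) (auto simp: defs b7)
    done
  have P2: "fuzzy_hom_lie_subalgebra (dsum_carrier n L) (dsum_op2 n add) (dsum_smult n sm)
           (dsum_op2 n br) (dsum_map n \<alpha>) (fuzzy_dsum n \<mu>)"
    unfolding fuzzy_hom_lie_subalgebra_def
  proof (intro conjI ballI allI)
    fix x assume x: "x \<in> dsum_carrier n L"
    have "0 < n" using assms(1) by simp
    then show "0 \<le> fuzzy_dsum n \<mu> x" using x f0 by (intro Mge) (auto simp: mem_dsum)
    show "fuzzy_dsum n \<mu> x \<le> 1" using Mle[of 0 x] f0[of 0 "x 0"] x \<open>0<n\<close> by (auto simp: mem_dsum)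
    show "fuzzy_dsum n \<mu> (dsum_map n \<alpha> x) \<ge> fuzzy_dsum n \<mu> x"
      using x by (intro Mge) (auto simp: defs intro: order_trans[OF Mle f4])
    fix c show "fuzzy_dsum n \<mu> (dsum_smult n sm c x) \<ge> fuzzy_dsum n \<mu> x"
      using x by (intro Mge) (auto simp: defs intro: order_trans[OF Mle f2])
  next
    fix x y assume x: "x \<in> dsum_carrier n L" and y: "y \<in> dsum_carrier n L"
    show "fuzzy_dsum n \<mu> (dsum_op2 n add x y) \<ge> min (fuzzy_dsum n \<mu> x) (fuzzy_dsum n \<mu> y)"
    proof (rule Mge)
      fix i assume i: "i<n"
      have "min (fuzzy_dsum n \<mu> x) (fuzzy_dsum n \<mu> y) \<le> min (\<mu> i (x i)) (\<mu> i (y i))"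
        using Mle[OF i, of x] Mle[OF i, of y] by linarith
      also have "\<dots> \<le> \<mu> i (add i (x i) (y i))" using f1 i x y by (auto simp: mem_dsum)
      finally show "min (fuzzy_dsum n \<mu> x) (fuzzy_dsum n \<mu> y) \<le> \<mu> i (dsum_op2 n add x y i)"
        using i by (simp add: dsum_op2_def)
    qed
    show "fuzzy_dsum n \<mu> (dsum_op2 n br x y) \<ge> min (fuzzy_dsum n \<mu> x) (fuzzy_dsum n \<mu> y)"
    proof (rule Mge)
      fix i assume i: "i<n"
      have "min (fuzzy_dsum n \<mu> x) (fuzzy_dsum n \<mu> y) \<le> min (\<mu> i (x i)) (\<mu> i (y i))"
        using Mle[OF i, of x] Mle[OF i, of y] by linarith
      also have "\<dots> \<le> \<mu> i (br i (x i) (y i))" using f3 i x y by (auto simp: mem_dsum)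
      finally show "min (fuzzy_dsum n \<mu> x) (fuzzy_dsum n \<mu> y) \<le> \<mu> i (dsum_op2 n br x y i)"
        using i by (simp add: dsum_op2_def)
    qed
  qed
  show ?thesis using P1 P2 by blast
qed

end
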